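(* For $\varepsilon>0$ and $d\in\mathbb R^{R\times R}$ let $\hat J_{\varepsilon,d}(\beta)=\sum_{i,j=1}^R\exp\big([-d(i,j)-\beta(i)+\beta(j)]/\varepsilon\big)$ for $\beta\in\mathbb R^R$. Then minimizers of $\hat J_{\varepsilon,d}$ exist. Moreover, let $\varepsilon_1>\varepsilon_2>0$, $d_1,d_2\in\mathbb R^{R\times R}$, let $\beta_1^\dagger,\beta_2^\dagger$ be minimizers of $\hat J_{\varepsilon_1,d_1}$ and $\hat J_{\varepsilon_2,d_2}$, $\Delta d=d_2-d_1$, $\Delta\beta=\beta_2^\dagger-\beta_1^\dagger$, and $w\in\mathbb R^{R\times R}$, $w(i,j)=\max\{-\Delta d(i,j),\Delta d(j,i)\}$. Then $$\max\Delta\beta-\min\Delta\beta\le\mathrm{maxdiam}(w)+2\varepsilon_1R\log R,$$ where $\mathrm{maxdiam}(w)=\max\big\{\sum_{i=1}^{k-1}w(j_i,j_{i+1}):k\in\{2,\dots,R\},\ j_1,\dots,j_k\in\{1,\dots,R\}\text{ pairwise distinct}\big\}$ is the length of the longest cycle-free path in $\{1,\dots,R\}$ with edge lengths $w$.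
   Context: $\max\Delta\beta$ and $\min\Delta\beta$ denote the largest and smallest entries of the vector $\Delta\beta$. *)

theory Defs
  imports Main "HOL.Complex_Main"
begin

text \<open>The index set {1..R} is modelled by a finite type 'n with CARD('n) = R.\<close>

definition Jhat :: "real \<Rightarrow> ('n::finite \<Rightarrow> 'n \<Rightarrow> real) \<Rightarrow> ('n \<Rightarrow> real) \<Rightarrow> real" where
  "Jhat eps d beta = (\<Sum>i\<in>UNIV. \<Sum>j\<in>UNIV. exp ((- d i j - beta i + beta j) / eps))"

definition is_minimizer :: "(('n \<Rightarrow> real) \<Rightarrow> real) \<Rightarrow> ('n \<Rightarrow> real) \<Rightarrow> bool" where
  "is_minimizer J b \<longleftrightarrow> (\<forall>beta. J b \<le> J beta)"

definition path_len :: "('n \<Rightarrow> 'n \<Rightarrow> real) \<Rightarrow> 'n list \<Rightarrow> real" where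
  "path_len w js = (\<Sum>i<length js - 1. w (js ! i) (js ! Suc i))"

text \<open>Paths of k pairwise distinct vertices, 2 \<le> k \<le> R. For R = 1 the set is empty and we use
  the convention maxdiam = 0.\<close>
definition maxdiam :: "('n::finite \<Rightarrow> 'n \<Rightarrow> real) \<Rightarrow> real" where
  "maxdiam w = (let S = {path_len w js | js. distinct js \<and> 2 \<le> length js \<and> length js \<le> card (UNIV :: 'n set)}
                in if S = {} then 0 else Max S)"

end

theory Submission imports Defs begin

lemma amgm_eq:
  fixes P Q :: real
  assumes P: "P > 0" and Q: "Q > 0" and H: "\<And>s. P + Q \<le> P * exp (- s) + Q * exp s"
  shows "P = Q"
proof -
  define x where "x = exp (ln P / 2)"
  define y where "y = exp (ln Q / 2)"
  have xpos: "x > 0" "y > 0" unfolding x_def y_def by auto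
  have Px: "P = x * x" unfolding x_def using P by (simp add: exp_add[symmetric])
  have Qy: "Q = y * y" unfolding y_def using Q by (simp add: exp_add[symmetric])
  define s where "s = (ln P - ln Q) / 2"
  have e1: "exp s = x / y" unfolding s_def x_def y_def
    by (simp add: exp_diff[symmetric] diff_divide_distrib)
  have e2: "exp (- s) = y / x" using e1 by (simp add: exp_minus)
  have "x * x + y * y \<le> x * x * (y / x) + y * y * (x / y)"
    using H[of s] Px Qy e1 e2 by simp
  also have "\<dots> = 2 * x * y" using xpos by (simp add: field_simps)
  finally have "(x - y)^2 \<le> 0" by (simp add: power2_eq_square algebra_simps)
  hence "x = y" by simp
  thus ?thesis using Px Qy by simp
qed

definition Outs :: "'n set \<Rightarrow> ('n \<times> 'n) set" where
  "Outs S = {p. fst p \<in> S \<and> snd p \<notin> S}"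
definition Ins :: "'n set \<Rightarrow> ('n \<times> 'n) set" where
  "Ins S = {p. fst p \<notin> S \<and> snd p \<in> S}"
definition Sames :: "'n set \<Rightarrow> ('n \<times> 'n) set" where
  "Sames S = {p. (fst p \<in> S) = (snd p \<in> S)}"

definition EE :: "real \<Rightarrow> ('n \<Rightarrow> 'n \<Rightarrow> real) \<Rightarrow> ('n \<Rightarrow> real) \<Rightarrow> 'n \<times> 'n \<Rightarrow> real" where
  "EE eps d b p = exp ((- d (fst p) (snd p) - b (fst p) + b (snd p)) / eps)"

lemma Jhat_split:
  fixes S :: "'n::finite set"
  shows "Jhat eps d b = sum (EE eps d b) (Outs S) + sum (EE eps d b) (Ins S) + sum (EE eps d b) (Sames S)"
proof -
  have "Jhat eps d b = sum (EE eps d b) (UNIV \<times> UNIV)"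
    unfolding Jhat_def EE_def by (simp add: sum.cartesian_product case_prod_beta)
  also have "UNIV \<times> UNIV = Outs S \<union> (Ins S \<union> Sames S)"
    unfolding Outs_def Ins_def Sames_def by auto
  also have "sum (EE eps d b) \<dots> = sum (EE eps d b) (Outs S) + (sum (EE eps d b) (Ins S) + sum (EE eps d b) (Sames S))"
    apply (subst sum.union_disjoint) apply (auto simp: Outs_def Ins_def Sames_def)
    apply (subst sum.union_disjoint) apply (auto simp: Outs_def Ins_def Sames_def)
    done
  finally show ?thesis by simp
qed

lemma balance:
  fixes S :: "'n::finite set"
  assumes eps: "eps > 0" and mn: "is_minimizer (Jhat eps d) b" and S: "S \<noteq> {}" "S \<noteq> UNIV"
  shows "sum (EE eps d b) (Outs S) = sum (EE eps d b) (Ins S)"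
proof -
  define P where "P = sum (EE eps d b) (Outs S)"
  define Q where "Q = sum (EE eps d b) (Ins S)"
  obtain i where i: "i \<in> S" using S by auto
  obtain j where j: "j \<notin> S" using S by auto
  have P0: "P > 0" unfolding P_def
    by (rule sum_pos) (use i j in \<open>auto simp: Outs_def EE_def\<close>)
  have Q0: "Q > 0" unfolding Q_def
    by (rule sum_pos) (use i j in \<open>auto simp: Ins_def EE_def\<close>)
  have "P + Q \<le> P * exp (- s) + Q * exp s" for s
  proof -
    define b' where "b' = (\<lambda>k. b k + (if k \<in> S then eps * s else 0))"
    have "Jhat eps d b \<le> Jhat eps d b'" using mn unfolding is_minimizer_def by blast
    moreover have "sum (EE eps d b') (Outs S) = P * exp (- s)"
      unfolding P_def sum_distrib_right
      by (rule sum.cong) (use eps in \<open>auto simp: Outs_def EE_def b'_def exp_add[symmetric] field_simps\<close>)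
    moreover have "sum (EE eps d b') (Ins S) = Q * exp s"
      unfolding Q_def sum_distrib_right
      by (rule sum.cong) (use eps in \<open>auto simp: Ins_def EE_def b'_def exp_add[symmetric] field_simps\<close>)
    moreover have "sum (EE eps d b') (Sames S) = sum (EE eps d b) (Sames S)"
      by (rule sum.cong) (auto simp: Sames_def EE_def b'_def)
    ultimately show ?thesis using Jhat_split[of eps d b S] Jhat_split[of eps d b' S]
      unfolding P_def Q_def by linarith
  qed
  thus ?thesis using amgm_eq[OF P0 Q0] unfolding P_def Q_def by blast
qed

lemma key:
  fixes S :: "'n::finite set" and d1 d2 :: "'n \<Rightarrow> 'n \<Rightarrow> real" and b1 b2 :: "'n \<Rightarrow> real"
  assumes e: "eps2 > 0" "eps2 \<le> eps1"
    and m1: "is_minimizer (Jhat eps1 d1) b1" and m2: "is_minimizer (Jhat eps2 d2) b2"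
    and S: "S \<noteq> {}" "S \<noteq> UNIV"
  shows "\<exists>i\<in>S. \<exists>j. j \<notin> S \<and> (b2 i - b1 i) - (b2 j - b1 j)
           \<le> max (- (d2 i j - d1 i j)) (d2 j i - d1 j i) + eps1 * ln (real (card (UNIV :: 'n set)) * real (card (UNIV :: 'n set)))"
proof (rule ccontr)
  define N where "N = real (card (UNIV :: 'n set)) * real (card (UNIV :: 'n set))"
  define c where "c = eps1 * ln N"
  define Db where "Db = (\<lambda>i. b2 i - b1 i)"
  define Dd where "Dd = (\<lambda>i j. d2 i j - d1 i j)"
  assume "\<not> ?thesis"
  hence H: "\<And>i j. i \<in> S \<Longrightarrow> j \<notin> S \<Longrightarrow> Db i - Db j > max (- Dd i j) (Dd j i) + c"
    unfolding Db_def Dd_def c_def N_def by force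
  have eps1: "eps1 > 0" using e by simp
  define a1 where "a1 = (\<lambda>p. - d1 (fst p) (snd p) - b1 (fst p) + b1 (snd p))"
  define a2 where "a2 = (\<lambda>p. - d2 (fst p) (snd p) - b2 (fst p) + b2 (snd p))"
  have bal1: "(\<Sum>p\<in>Outs S. exp (a1 p / eps1)) = (\<Sum>p\<in>Ins S. exp (a1 p / eps1))"
    using balance[OF eps1 m1 S] unfolding EE_def a1_def by simp
  have bal2: "(\<Sum>p\<in>Outs S. exp (a2 p / eps2)) = (\<Sum>p\<in>Ins S. exp (a2 p / eps2))"
    using balance[OF e(1) m2 S] unfolding EE_def a2_def by simp
  have cardN: "real (card A) \<le> N" for A :: "('n \<times> 'n) set"
  proof -
    have "card A \<le> card (UNIV :: ('n \<times> 'n) set)" by (rule card_mono) auto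
    also have "\<dots> = card (UNIV :: 'n set) * card (UNIV :: 'n set)" by (metis UNIV_Times_UNIV card_cartesian_product)
    finally show ?thesis unfolding N_def by (metis of_nat_le_iff of_nat_mult)
  qed
  have c1: "real (card (UNIV::'n set)) \<ge> 1" using card_gt_0_iff[of "UNIV::'n set"] by simp
  have N1: "N \<ge> 1" unfolding N_def using c1 mult_mono[of 1 "real (card (UNIV::'n set))" 1 "real (card (UNIV::'n set))"] by simp
  have lnN: "ln N \<ge> 0" using N1 by simp
  obtain i j where ij: "i \<in> S" "j \<notin> S" using S by auto
  have OutNE: "Outs S \<noteq> {}" using ij unfolding Outs_def by auto
  have InNE: "Ins S \<noteq> {}" using ij unfolding Ins_def by auto
  define Mx where "Mx = Max (a2 ` Outs S)"
  have "Mx \<in> a2 ` Outs S" unfolding Mx_def by (rule Max_in) (use OutNE in auto)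
  then obtain e0 where e0: "e0 \<in> Outs S" "a2 e0 = Mx" by auto
  have Mxge: "\<And>p. p \<in> Outs S \<Longrightarrow> a2 p \<le> Mx" unfolding Mx_def by simp
  have sumO2: "(\<Sum>p\<in>Outs S. exp (a2 p / eps2)) \<le> N * exp (Mx / eps2)"
  proof -
    have "(\<Sum>p\<in>Outs S. exp (a2 p / eps2)) \<le> real (card (Outs S)) * exp (Mx / eps2)"
      by (rule sum_bounded_above) (use Mxge e in \<open>auto simp: divide_right_mono\<close>)
    also have "\<dots> \<le> N * exp (Mx / eps2)" using cardN[of "Outs S"] by simp
    finally show ?thesis .
  qed
  have inb: "a1 f < Mx + eps2 * ln N - c" if f: "f \<in> Ins S" for f
  proof -
    have "exp (a2 f / eps2) \<le> (\<Sum>p\<in>Ins S. exp (a2 p / eps2))"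
      by (rule member_le_sum) (use f in auto)
    also have "\<dots> \<le> N * exp (Mx / eps2)" using bal2 sumO2 by simp
    also have "\<dots> = exp (ln N + Mx / eps2)" using N1 by (simp add: exp_add)
    finally have "a2 f / eps2 \<le> ln N + Mx / eps2" by simp
    hence A: "a2 f \<le> eps2 * ln N + Mx" using e by (simp add: field_simps)
    obtain p q where pq: "f = (p, q)" by force
    have "q \<in> S" "p \<notin> S" using f pq unfolding Ins_def by auto
    from H[OF this] have "Db q - Db p > Dd p q + c" by simp
    hence "a2 f - a1 f > c" unfolding a1_def a2_def pq Db_def Dd_def by simp
    thus ?thesis using A by simp
  qed
  have eb: "a1 e0 > Mx + c"
  proof -
    obtain p q where pq: "e0 = (p, q)" by force
    have "p \<in> S" "q \<notin> S" using e0 pq unfolding Outs_def by auto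
    from H[OF this] have "Db p - Db q > - Dd p q + c" by simp
    hence "a2 e0 - a1 e0 < - c" unfolding a1_def a2_def pq Db_def Dd_def by simp
    thus ?thesis using e0 by simp
  qed
  define K where "K = exp ((a1 e0 + eps2 * ln N - 2 * c) / eps1)"
  have "exp (a1 e0 / eps1) \<le> (\<Sum>p\<in>Outs S. exp (a1 p / eps1))"
    by (rule member_le_sum) (use e0 in auto)
  also have "\<dots> = (\<Sum>p\<in>Ins S. exp (a1 p / eps1))" by (rule bal1)
  also have "\<dots> < real (card (Ins S)) * K"
  proof (rule sum_bounded_above_strict)
    fix f assume f: "f \<in> Ins S"
    have "a1 f < a1 e0 + eps2 * ln N - 2 * c" using inb[OF f] eb by simp
    thus "exp (a1 f / eps1) < K" unfolding K_def using eps1 by (simp add: divide_strict_right_mono)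
  next
    show "0 < card (Ins S)" using InNE by (simp add: card_gt_0_iff)
  qed
  also have "\<dots> \<le> N * K" using cardN[of "Ins S"] by (simp add: K_def)
  also have "\<dots> = exp (ln N + (a1 e0 + eps2 * ln N - 2 * c) / eps1)"
    using N1 by (simp add: K_def exp_add)
  finally have "a1 e0 / eps1 < ln N + (a1 e0 + eps2 * ln N - 2 * c) / eps1" by simp
  hence "a1 e0 < eps1 * ln N + a1 e0 + eps2 * ln N - 2 * c" using eps1 by (simp add: field_simps)
  moreover have "eps2 * ln N \<le> eps1 * ln N" using e lnN by (simp add: mult_right_mono)
  ultimately show False unfolding c_def by simp
qed

lemma path_len_Cons:
  assumes "js \<noteq> []"
  shows "path_len w (i # js) = w i (hd js) + path_len w js"
proof -
  obtain j js' where js: "js = j # js'" using assms by (cases js) auto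
  have "path_len w (i # js) = (\<Sum>k<Suc (length js'). w ((i # j # js') ! k) ((i # j # js') ! Suc k))"
    unfolding path_len_def js by simp
  also have "\<dots> = w i j + (\<Sum>k<length js'. w ((j # js') ! k) ((j # js') ! Suc k))"
    by (subst sum.lessThan_Suc_shift) simp
  also have "\<dots> = w i (hd js) + path_len w js" unfolding path_len_def js by simp
  finally show ?thesis .
qed

lemma path_len_single: "path_len w [i] = 0"
  unfolding path_len_def by simp

lemma grow:
  fixes Db :: "'n::finite \<Rightarrow> real" and m :: 'n
  assumes step: "\<And>T. m \<in> T \<Longrightarrow> T \<noteq> UNIV \<Longrightarrow> \<exists>i j. i \<notin> T \<and> j \<in> T \<and> Db i - Db j \<le> w i j + c"
  shows "\<exists>js. distinct js \<and> js \<noteq> [] \<and> hd js = v \<and> last js = m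
           \<and> Db v - Db m \<le> path_len w js + real (length js - 1) * c"
proof -
  define P where "P = (\<lambda>T. \<forall>v\<in>T. \<exists>js. distinct js \<and> js \<noteq> [] \<and> hd js = v \<and> last js = m
           \<and> set js \<subseteq> T \<and> Db v - Db m \<le> path_len w js + real (length js - 1) * c)"
  have "\<exists>T. m \<in> T \<and> min (Suc k) (card (UNIV::'n set)) \<le> card T \<and> P T" for k
  proof (induction k)
    case 0
    show ?case
      by (rule exI[of _ "{m}"]) (auto simp: P_def path_len_single intro!: exI[of _ "[m]"])
  next
    case (Suc k)
    then obtain T where T: "m \<in> T" "min (Suc k) (card (UNIV::'n set)) \<le> card T" "P T" by blast
    show ?case
    proof (cases "T = UNIV")
      case True
      thus ?thesis using T by (intro exI[of _ T]) auto
    next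
      case False
      obtain i j where ij: "i \<notin> T" "j \<in> T" "Db i - Db j \<le> w i j + c" using step[OF T(1) False] by blast
      obtain js where js: "distinct js" "js \<noteq> []" "hd js = j" "last js = m" "set js \<subseteq> T"
        "Db j - Db m \<le> path_len w js + real (length js - 1) * c"
        using T(3) ij(2) unfolding P_def by blast
      have "P (insert i T)"
        unfolding P_def
      proof
        fix v assume v: "v \<in> insert i T"
        show "\<exists>js. distinct js \<and> js \<noteq> [] \<and> hd js = v \<and> last js = m
           \<and> set js \<subseteq> insert i T \<and> Db v - Db m \<le> path_len w js + real (length js - 1) * c"
        proof (cases "v = i")
          case False
          hence "v \<in> T" using v by simp
          then obtain js' where "distinct js'" "js' \<noteq> []" "hd js' = v" "last js' = m" "set js' \<subseteq> T"
            "Db v - Db m \<le> path_len w js' + real (length js' - 1) * c"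
            using T(3) unfolding P_def by blast
          thus ?thesis by (intro exI[of _ js']) auto
        next
          case True
          have pl: "path_len w (i # js) = w i j + path_len w js" using path_len_Cons[OF js(2)] js(3) by simp
          have len: "real (length (i # js) - 1) = real (length js - 1) + 1" using js(2) by (cases js) auto
          have d: "distinct (i # js)" using js(1,5) ij(1) by auto
          have l: "last (i # js) = m" using js(2,4) by simp
          have st: "set (i # js) \<subseteq> insert i T" using js(5) by auto
          have ineq: "Db v - Db m \<le> path_len w (i # js) + real (length (i # js) - 1) * c"
            unfolding pl len True using ij(3) js(6) by (simp add: algebra_simps)
          show ?thesis using d l st ineq True by (intro exI[of _ "i # js"]) simp
        qed
      qed
      moreover have "card (insert i T) = Suc (card T)" using ij(1) by simp
      ultimately show ?thesis using T by (intro exI[of _ "insert i T"]) auto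
    qed
  qed
  then obtain T where T: "m \<in> T" "min (Suc (card (UNIV::'n set))) (card (UNIV::'n set)) \<le> card T" "P T"
    by blast
  have "T = UNIV" using T(2) by (metis card_seteq finite_UNIV min.absorb2 le_SucI order_refl subset_UNIV)
  thus ?thesis using T(3) unfolding P_def by blast
qed

lemma maxdiam_finite:
  fixes w :: "'n::finite \<Rightarrow> 'n \<Rightarrow> real"
  shows "finite {path_len w js | js. distinct js \<and> 2 \<le> length js \<and> length js \<le> card (UNIV :: 'n::finite set)}"
proof -
  have "{path_len w js | js. distinct js \<and> 2 \<le> length js \<and> length js \<le> card (UNIV :: 'n set)}
     \<subseteq> path_len w ` {xs. set xs \<subseteq> (UNIV :: 'n set) \<and> length xs \<le> card (UNIV :: 'n set)}" by auto
  moreover have "finite (path_len w ` {xs. set xs \<subseteq> (UNIV :: 'n set) \<and> length xs \<le> card (UNIV :: 'n set)})"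
    by (intro finite_imageI finite_lists_length_le) simp
  ultimately show ?thesis by (rule finite_subset)
qed

lemma maxdiam_ge:
  fixes js :: "'n::finite list" and w :: "'n \<Rightarrow> 'n \<Rightarrow> real"
  assumes "distinct js" "2 \<le> length js"
  shows "path_len w js \<le> maxdiam w"
proof -
  have len: "length js \<le> card (UNIV :: 'n set)"
    using assms(1) distinct_card[of js] card_mono[of UNIV "set js"] by simp
  have mem: "path_len w js \<in> {path_len w js | js. distinct js \<and> 2 \<le> length js \<and> length js \<le> card (UNIV :: 'n set)}"
    using assms len by blast
  hence ne: "{path_len w js | js. distinct js \<and> 2 \<le> length js \<and> length js \<le> card (UNIV :: 'n set)} \<noteq> {}" by blast
  show ?thesis unfolding maxdiam_def Let_def if_not_P[OF ne] by (rule Max_ge[OF maxdiam_finite mem])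
qed

lemma maxdiam_nonneg:
  fixes w :: "'n::finite \<Rightarrow> 'n \<Rightarrow> real"
  assumes sym: "\<And>i j. 0 \<le> w i j + w j i"
  shows "0 \<le> maxdiam w"
proof (cases "{path_len w js | js. distinct js \<and> 2 \<le> length js \<and> length js \<le> card (UNIV :: 'n set)} = {}")
  case True
  thus ?thesis unfolding maxdiam_def Let_def by simp
next
  case False
  then obtain js :: "'n list" where js: "distinct js" "2 \<le> length js" by blast
  obtain i j rest where ijr: "js = i # j # rest" using js(2)
    by (metis Suc_le_length_iff numeral_2_eq_2)
  have "i \<noteq> j" using js(1) ijr by auto
  hence "path_len w [i, j] \<le> maxdiam w" "path_len w [j, i] \<le> maxdiam w"
    by (auto intro!: maxdiam_ge)
  moreover have "path_len w [i, j] = w i j" "path_len w [j, i] = w j i"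
    unfolding path_len_def by simp_all
  ultimately show ?thesis using sym[of i j] by linarith
qed

lemma subseq_conv:
  fixes X :: "nat \<Rightarrow> 'n \<Rightarrow> real"
  assumes "finite A" and bnd: "\<And>n i. \<bar>X n i\<bar> \<le> B"
  shows "\<exists>r. strict_mono r \<and> (\<forall>i\<in>A. convergent (\<lambda>n. X (r n) i))"
  using assms(1)
proof induction
  case empty
  show ?case by (rule exI[of _ id]) (simp add: strict_mono_def)
next
  case (insert a A)
  then obtain r where r: "strict_mono r" "\<forall>i\<in>A. convergent (\<lambda>n. X (r n) i)" by blast
  obtain s where s: "strict_mono s" "monoseq (\<lambda>n. X (r (s n)) a)" using seq_monosub[of "\<lambda>n. X (r n) a"] by blast
  have bb: "\<forall>n. norm (X (r (s n)) a) \<le> \<bar>B\<bar> + 1"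
  proof
    fix n
    have "\<bar>X (r (s n)) a\<bar> \<le> B" by (rule bnd)
    thus "norm (X (r (s n)) a) \<le> \<bar>B\<bar> + 1" by simp
  qed
  have "Bseq (\<lambda>n. X (r (s n)) a)" by (rule BseqI[OF _ bb]) simp
  hence ca: "convergent (\<lambda>n. X (r (s n)) a)" using s(2) Bseq_monoseq_convergent by blast
  have "convergent (\<lambda>n. X (r (s n)) i)" if i: "i \<in> A" for i
  proof -
    from r(2) i have "(\<lambda>n. X (r n) i) \<longlonglongrightarrow> lim (\<lambda>n. X (r n) i)"
      using convergent_LIMSEQ_iff by blast
    from LIMSEQ_subseq_LIMSEQ[OF this s(1)] show ?thesis
      unfolding convergent_def o_def by blast
  qed
  thus ?case using ca strict_mono_o[OF r(1) s(1)] by (intro exI[of _ "r \<circ> s"]) (auto simp: o_def)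
qed

lemma term_le:
  fixes f :: "'n::finite \<Rightarrow> 'n \<Rightarrow> real"
  assumes "\<And>i j. 0 \<le> f i j"
  shows "f i j \<le> (\<Sum>i\<in>UNIV. \<Sum>j\<in>UNIV. f i j)"
proof -
  have "f i j \<le> (\<Sum>j\<in>UNIV. f i j)" by (rule member_le_sum) (use assms in auto)
  also have "\<dots> \<le> (\<Sum>i\<in>UNIV. \<Sum>j\<in>UNIV. f i j)"
    by (rule member_le_sum[of i UNIV "\<lambda>i. \<Sum>j\<in>UNIV. f i j"]) (simp_all add: sum_nonneg assms)
  finally show ?thesis .
qed

lemma Jhat_shift: "Jhat eps d (\<lambda>i. b i - c) = Jhat eps d b"
  unfolding Jhat_def by (simp add: algebra_simps)

lemma exist_min:
  fixes d :: "'n::finite \<Rightarrow> 'n \<Rightarrow> real"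
  assumes eps: "eps > 0"
  shows "\<exists>b. is_minimizer (Jhat eps d) b"
proof -
  define J where "J = Jhat eps d"
  define m where "m = Inf (range J)"
  define i0 :: 'n where "i0 = undefined"
  define J0 where "J0 = J (\<lambda>_. 0)"
  define Dm where "Dm = (\<Sum>i\<in>UNIV. \<Sum>j\<in>UNIV. \<bar>d i j\<bar>)"
  define B where "B = eps * ln (J0 + 1) + Dm"
  have Jnn: "0 \<le> J b" for b unfolding J_def Jhat_def by (intro sum_nonneg) auto
  have bdd: "bdd_below (range J)" using Jnn by (intro bdd_belowI[of _ 0]) auto
  have mJ: "m \<le> J b" for b unfolding m_def by (rule cInf_lower) (use bdd in auto)
  have J0: "J0 \<ge> 0" unfolding J0_def by (rule Jnn)
  have Dm: "\<bar>d i j\<bar> \<le> Dm" for i j unfolding Dm_def by (rule term_le) auto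
  have bound: "\<bar>b i\<bar> \<le> B" if b0: "b i0 = 0" and bJ: "J b < J0 + 1" for b i
  proof -
    have t: "- d p q - b p + b q < eps * ln (J0 + 1)" for p q
    proof -
      have "exp ((- d p q - b p + b q) / eps) \<le> J b"
        unfolding J_def Jhat_def by (rule term_le[of "\<lambda>p q. exp ((- d p q - b p + b q) / eps)"]) auto
      also have "\<dots> < J0 + 1" by (rule bJ)
      finally have "(- d p q - b p + b q) / eps < ln (J0 + 1)"
        using J0 by (metis exp_less_cancel_iff exp_ln add_nonneg_pos zero_less_one)
      thus ?thesis using eps by (simp add: field_simps)
    qed
    have "b i \<le> B" using t[of i0 i] b0 Dm[of i0 i] unfolding B_def by simp
    moreover have "- b i \<le> B" using t[of i i0] b0 Dm[of i i0] unfolding B_def by simp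
    ultimately show ?thesis by simp
  qed
  have "\<exists>b. b i0 = 0 \<and> J b < m + inverse (real (Suc n))" for n
  proof -
    have "Inf (range J) < m + inverse (real (Suc n))" unfolding m_def by simp
    then obtain \<beta> where "J \<beta> < m + inverse (real (Suc n))"
      using cInf_lessD[of "range J"] by blast
    moreover have "J (\<lambda>i. \<beta> i - \<beta> i0) = J \<beta>" unfolding J_def by (rule Jhat_shift)
    ultimately show ?thesis by (intro exI[of _ "\<lambda>i. \<beta> i - \<beta> i0"]) simp
  qed
  then obtain X where X: "\<And>n. X n i0 = 0" "\<And>n. J (X n) < m + inverse (real (Suc n))" by metis
  have XB: "\<bar>X n i\<bar> \<le> B" for n i
  proof -
    have "inverse (real (Suc n)) \<le> 1" by (simp add: inverse_le_1_iff)
    hence "J (X n) < J0 + 1" using X(2)[of n] mJ[of "\<lambda>_. 0"] unfolding J0_def by linarith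
    thus ?thesis by (rule bound[of "X n", OF X(1)[of n]])
  qed
  obtain r where r: "strict_mono r" "\<forall>i\<in>UNIV. convergent (\<lambda>n. X (r n) i)"
    using subseq_conv[of UNIV X B, OF finite_UNIV XB] by blast
  define L where "L = (\<lambda>i. lim (\<lambda>n. X (r n) i))"
  have lim: "\<And>i. (\<lambda>n. X (r n) i) \<longlonglongrightarrow> L i" using r(2) unfolding L_def
    by (simp add: convergent_LIMSEQ_iff)
  have JL: "(\<lambda>n. J (X (r n))) \<longlonglongrightarrow> J L"
    unfolding J_def Jhat_def using eps by (intro tendsto_intros lim) auto
  have "J L \<le> m"
  proof (rule field_le_epsilon)
    fix e :: real assume e: "0 < e"
    obtain N :: nat where N: "N > 0" "inverse (real N) < e" using ex_inverse_of_nat_less[OF e] by blast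
    show "J L \<le> m + e"
    proof (rule LIMSEQ_le_const2[OF JL], intro exI allI impI)
      fix n assume n: "N \<le> n"
      have "N \<le> Suc (r n)" using seq_suble[OF r(1), of n] n by simp
      hence "inverse (real (Suc (r n))) \<le> inverse (real N)" using N(1) by (intro le_imp_inverse_le) auto
      thus "J (X (r n)) \<le> m + e" using X(2)[of "r n"] N(2) by linarith
    qed
  qed
  hence "\<forall>\<beta>. J L \<le> J \<beta>" using mJ order_trans by blast
  thus ?thesis unfolding is_minimizer_def J_def by blast
qed

lemma main_bound:
  fixes d1 d2 :: "'n::finite \<Rightarrow> 'n \<Rightarrow> real" and b1 b2 :: "'n \<Rightarrow> real"
  assumes e: "eps1 > eps2" "eps2 > 0"
    and m1: "is_minimizer (Jhat eps1 d1) b1" and m2: "is_minimizer (Jhat eps2 d2) b2"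
  shows "Max (range (\<lambda>i. b2 i - b1 i)) - Min (range (\<lambda>i. b2 i - b1 i))
    \<le> maxdiam (\<lambda>i j. max (- (d2 i j - d1 i j)) (d2 j i - d1 j i))
       + 2 * eps1 * real (card (UNIV :: 'n set)) * ln (real (card (UNIV :: 'n set)))"
proof -
  define Db where "Db = (\<lambda>i. b2 i - b1 i)"
  define w where "w = (\<lambda>i j. max (- (d2 i j - d1 i j)) (d2 j i - d1 j i))"
  define R where "R = real (card (UNIV :: 'n set))"
  define c where "c = eps1 * ln (R * R)"
  have R1: "R \<ge> 1" unfolding R_def using card_gt_0_iff[of "UNIV::'n set"] by simp
  have cR: "c = 2 * eps1 * ln R" unfolding c_def using R1 by (simp add: ln_mult)
  have c0: "c \<ge> 0" unfolding cR using R1 e by simp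
  have "Max (range Db) \<in> range Db" by (rule Max_in) auto
  then obtain M where M: "Db M = Max (range Db)" by (metis rangeE)
  have "Min (range Db) \<in> range Db" by (rule Min_in) auto
  then obtain m where m: "Db m = Min (range Db)" by (metis rangeE)
  have step: "\<exists>i j. i \<notin> T \<and> j \<in> T \<and> Db i - Db j \<le> w i j + c" if T: "m \<in> T" "T \<noteq> UNIV" for T
  proof -
    have "- T \<noteq> {}" "- T \<noteq> UNIV" using T by auto
    from key[OF e(2) less_imp_le[OF e(1)] m1 m2 this] obtain i j where
      "i \<in> - T" "j \<notin> - T" "Db i - Db j \<le> w i j + c"
      unfolding Db_def w_def c_def R_def by blast
    thus ?thesis by auto
  qed
  obtain js where js: "distinct js" "js \<noteq> []" "hd js = M" "last js = m"
    "Db M - Db m \<le> path_len w js + real (length js - 1) * c"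
    using grow[of m Db w c M] step by blast
  have len: "length js \<le> card (UNIV :: 'n set)"
    using js(1) distinct_card[of js] card_mono[of UNIV "set js"] by simp
  have wsym: "0 \<le> w i j + w j i" for i j unfolding w_def by linarith
  have Rc: "0 \<le> R * c" using R1 c0 by simp
  show ?thesis
  proof (cases "length js = 1")
    case True
    then obtain x where "js = [x]" by (cases js) auto
    hence "M = m" using js by simp
    thus ?thesis using maxdiam_nonneg[of w, OF wsym] Rc M m
      unfolding Db_def w_def R_def cR by (simp add: algebra_simps)
  next
    case False
    hence "2 \<le> length js" using length_greater_0_conv[of js] js(2) by linarith
    hence "path_len w js \<le> maxdiam w" using js(1) by (rule maxdiam_ge[rotated])
    moreover have "real (length js - 1) * c \<le> R * c"
      using len c0 unfolding R_def by (intro mult_right_mono) auto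
    ultimately have "Db M - Db m \<le> maxdiam w + R * c" using js(5) by linarith
    thus ?thesis using M m unfolding Db_def w_def R_def cR by (simp add: algebra_simps)
  qed
qed

theorem mainTheorem9:
  fixes eps1 eps2 :: real
    and d1 d2 :: "'n::finite \<Rightarrow> 'n \<Rightarrow> real"
    and b1 b2 :: "'n \<Rightarrow> real"
  shows "(\<forall>eps > 0. \<forall>d :: 'n \<Rightarrow> 'n \<Rightarrow> real. \<exists>b. is_minimizer (Jhat eps d) b)
    \<and> ((eps1 > eps2 \<and> eps2 > 0 \<and> is_minimizer (Jhat eps1 d1) b1 \<and> is_minimizer (Jhat eps2 d2) b2)
        \<longrightarrow> (let Dd = (\<lambda>i j. d2 i j - d1 i j);
                Db = (\<lambda>i. b2 i - b1 i);
                w = (\<lambda>i j. max (- Dd i j) (Dd j i))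
            in Max (range Db) - Min (range Db)
               \<le> maxdiam w + 2 * eps1 * real (card (UNIV :: 'n set)) * ln (real (card (UNIV :: 'n set)))))"
  using exist_min main_bound[of eps2 eps1 d1 b1 d2 b2] unfolding Let_def by blast

end
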